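(* Let $a,n$ be positive integers and write $(1+y+\cdots+y^{a-1})^n=\sum_{k=0}^{n(a-1)}c_k\,y^k$. For $0\le i\le a-1$ and a polynomial $f$ of one variable of degree less than $n$, define \[\Sigma_i f(y)=\sum_{k\equiv i\ (\mathrm{mod}\ a)}c_k\,f(y-k).\] Then $\Sigma_i f(y)$ is independent of $i$, and hence \[\Sigma_i f(y)=\frac1a\,(1+S+\cdots+S^{a-1})^n f(y),\] where $S$ is the shift operator $(Sf)(y)=f(y-1)$. *)

theory Defs
  imports "HOL-Computational_Algebra.Polynomial"
begin

definition cc :: "nat \<Rightarrow> nat \<Rightarrow> nat \<Rightarrow> nat" where
  "cc a n k = coeff ((\<Sum>j<a. monom (1::nat) j) ^ n) k"

definition shift :: "'a::comm_ring_1 poly \<Rightarrow> 'a poly" where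
  "shift f = pcompose f [:-1, 1:]"

definition Sigma_op :: "nat \<Rightarrow> nat \<Rightarrow> nat \<Rightarrow> 'a::comm_ring_1 poly \<Rightarrow> 'a poly" where
  "Sigma_op a n i f = (\<Sum>k\<in>{k. k \<le> n * (a - 1) \<and> k mod a = i}.
      smult (of_nat (cc a n k)) (pcompose f [:- of_nat k, 1:]))"

definition shift_sum :: "nat \<Rightarrow> 'a::comm_ring_1 poly \<Rightarrow> 'a poly" where
  "shift_sum a f = (\<Sum>j<a. (shift ^^ j) f)"

end

theory Submission
  imports Defs
begin

definition sh :: "nat \<Rightarrow> 'a::comm_ring_1 poly \<Rightarrow> 'a poly" where
  "sh k f = pcompose f [:- of_nat k, 1:]"

definition opS :: "'a::comm_ring_1 poly \<Rightarrow> 'a poly \<Rightarrow> 'a poly" where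
  "opS p f = (\<Sum>k\<le>degree p. smult (coeff p k) (sh k f))"

lemma smult_sum_right: "smult c (sum g A) = (\<Sum>i\<in>A. smult c (g i))"
  by (induct A rule: infinite_finite_induct) (auto simp: smult_add_right)

lemma opS_gen:
  assumes "finite K" "\<And>k. coeff p k \<noteq> 0 \<Longrightarrow> k \<in> K"
  shows "opS p f = (\<Sum>k\<in>K. smult (coeff p k) (sh k f))"
proof -
  have z: "\<And>k. k \<notin> K \<Longrightarrow> coeff p k = 0" using assms(2) by blast
  have "opS p f = (\<Sum>k\<in>K \<union> {..degree p}. smult (coeff p k) (sh k f))"
    unfolding opS_def
    by (rule sum.mono_neutral_left) (use assms in \<open>auto intro: le_degree\<close>)
  also have "\<dots> = (\<Sum>k\<in>K. smult (coeff p k) (sh k f))"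
    by (rule sum.mono_neutral_right) (use assms z in auto)
  finally show ?thesis .
qed

lemma opS_add: "opS (p + q) f = opS p f + opS q f"
proof -
  let ?K = "{..max (degree p) (degree q)}"
  have "opS (p + q) f = (\<Sum>k\<in>?K. smult (coeff (p+q) k) (sh k f))"
    by (rule opS_gen) (auto intro: le_degree simp: le_max_iff_disj coeff_eq_0 leI)
  moreover have "opS p f = (\<Sum>k\<in>?K. smult (coeff p k) (sh k f))"
    by (rule opS_gen) (auto intro: le_degree simp: le_max_iff_disj)
  moreover have "opS q f = (\<Sum>k\<in>?K. smult (coeff q k) (sh k f))"
    by (rule opS_gen) (auto intro: le_degree simp: le_max_iff_disj)
  ultimately show ?thesis by (simp add: smult_add_left sum.distrib)
qed

lemma opS_smult: "opS (smult c p) f = smult c (opS p f)"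
proof -
  have "opS (smult c p) f = (\<Sum>k\<le>degree p. smult (coeff (smult c p) k) (sh k f))"
    by (rule opS_gen) (auto intro: le_degree)
  then show ?thesis by (simp add: opS_def smult_sum_right)
qed

lemma opS_zero [simp]: "opS 0 f = 0"
  by (simp add: opS_def)

lemma opS_minus: "opS (p - q) f = opS p f - opS q f"
proof -
  have "opS (p - q) f + opS q f = opS p f" by (metis opS_add diff_add_cancel)
  then show ?thesis by (metis add_diff_cancel)
qed

lemma sh_0 [simp]: "sh 0 f = f"
  by (simp add: sh_def pcompose_idR)

lemma sh_Suc: "sh (Suc k) f = sh 1 (sh k f)"
  by (simp add: sh_def pcompose_assoc[symmetric] pcompose_pCons algebra_simps)

lemma sh_zero [simp]: "sh k 0 = 0"
  by (simp add: sh_def)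

lemma sh_add: "sh k (f + g) = sh k f + sh k g"
  by (simp add: sh_def pcompose_add)

lemma sh_diff: "sh k (f - g) = sh k f - sh k g"
  by (simp add: sh_def pcompose_diff)

lemma sh_smult: "sh k (smult c f) = smult c (sh k f)"
  by (simp add: sh_def pcompose_smult)

lemma sh_sum: "sh k (sum g A) = (\<Sum>i\<in>A. sh k (g i))"
  by (simp add: sh_def pcompose_sum)

lemma opS_pCons: "opS (pCons c p) f = smult c f + sh 1 (opS p f)"
proof -
  have "opS (pCons c p) f = (\<Sum>k\<le>Suc (degree p). smult (coeff (pCons c p) k) (sh k f))"
    by (rule opS_gen) (auto simp: coeff_pCons split: nat.splits intro: le_degree)
  also have "\<dots> = smult c f + (\<Sum>k\<le>degree p. smult (coeff p k) (sh (Suc k) f))"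
    by (subst sum.atMost_Suc_shift) simp
  also have "\<dots> = smult c f + sh 1 (opS p f)"
    by (simp add: opS_def sh_sum sh_smult sh_Suc[of _ f])
  finally show ?thesis .
qed

lemma opS_f0 [simp]: "opS p 0 = 0"
  by (simp add: opS_def)

lemma opS_fadd: "opS p (f + g) = opS p f + opS p g"
  by (simp add: opS_def sh_add smult_add_right sum.distrib)

lemma opS_fsmult: "opS p (smult c f) = smult c (opS p f)"
  by (simp add: opS_def sh_smult smult_sum_right mult.commute)

lemma opS_mult: "opS (p * q) f = opS p (opS q f)"
proof (induction p)
  case 0
  then show ?case by simp
next
  case (pCons c p)
  show ?case
    by (simp add: opS_add opS_smult opS_pCons pCons opS_fadd)
qed

lemma opS_one [simp]: "opS 1 f = f"
  using opS_pCons[of 1 0 f] by (simp add: one_pCons)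

lemma opS_sum: "finite A \<Longrightarrow> opS (sum g A) f = (\<Sum>i\<in>A. opS (g i) f)"
  by (induction A rule: finite_induct) (simp_all add: opS_add)

lemma opS_monom: "opS (monom 1 j) f = (shift ^^ j) f"
proof (induction j)
  case 0
  then show ?case by (simp add: monom_0 one_pCons[symmetric])
next
  case (Suc j)
  then show ?case
    by (simp add: monom_Suc opS_pCons shift_def sh_def)
qed

lemma sh_minus: "sh k (- g) = - sh k g"
  using sh_diff[of k 0 g] by simp

lemma opS_lin: "opS [:1, -1:] g = g - sh 1 g"
  by (simp add: opS_pCons sh_smult sh_minus)

lemma sh1_degree:
  fixes f :: "'a::idom poly"
  assumes "degree f > 0"
  shows "degree (f - sh 1 f) < degree f"
proof -
  have dg: "degree (sh 1 f) = degree f" by (simp add: sh_def degree_pcompose)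
  have lc: "lead_coeff (sh 1 f) = lead_coeff f" by (simp add: sh_def lead_coeff_comp)
  have le: "degree (f - sh 1 f) \<le> degree f" using degree_diff_le[of f "degree f" "sh 1 f"] dg by simp
  have c0: "coeff (f - sh 1 f) (degree f) = 0" using lc dg by simp
  show ?thesis
  proof (rule ccontr)
    assume "\<not> ?thesis"
    then have "degree (f - sh 1 f) = degree f" using le by simp
    moreover have "f - sh 1 f = 0" using c0 \<open>degree (f - sh 1 f) = degree f\<close> by (metis leading_coeff_0_iff)
    ultimately show False using assms by simp
  qed
qed

lemma opS_kill:
  fixes f :: "'a::idom poly"
  shows "degree f < n \<Longrightarrow> opS ([:1, -1:] ^ n) f = 0"
proof (induction n arbitrary: f)
  case 0
  then show ?case by simp
next
  case (Suc n)
  have "opS ([:1, -1:] ^ Suc n) f = opS ([:1, -1:] ^ n) (f - sh 1 f)"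
    by (simp only: power_Suc2 opS_mult opS_lin)
  also have "\<dots> = 0"
  proof (cases "degree f = 0")
    case True
    then obtain c where "f = [:c:]" by (metis degree_eq_zeroE)
    then have "f - sh 1 f = 0" by (simp add: sh_def)
    then show ?thesis by simp
  next
    case False
    then have "degree (f - sh 1 f) < n" using sh1_degree[of f] Suc.prems by simp
    then show ?thesis by (rule Suc.IH)
  qed
  finally show ?case .
qed

definition sec :: "nat \<Rightarrow> nat \<Rightarrow> 'a::comm_ring_1 poly \<Rightarrow> 'a poly" where
  "sec a i p = (\<Sum>k\<le>degree p. if k mod a = i mod a then monom (coeff p k) k else 0)"

lemma coeff_sec: "coeff (sec a i p) k = (if k mod a = i mod a then coeff p k else 0)"
proof -
  have "coeff (sec a i p) k = (\<Sum>j\<le>degree p. if j = k then (if k mod a = i mod a then coeff p k else 0) else 0)"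
    unfolding sec_def coeff_sum by (intro sum.cong) (auto simp: coeff_monom)
  also have "\<dots> = (if k mod a = i mod a then coeff p k else 0)"
    by (auto simp: coeff_eq_0)
  finally show ?thesis .
qed

lemma mod_shift_nat: "(x::nat) mod a = y mod a \<longleftrightarrow> (x + t) mod a = (y + t) mod a"
  by (simp add: nat_mod_eq_iff)

lemma modlem:
  fixes k t a i :: nat
  assumes "t \<le> k" "t < a"
  shows "((k - t) mod a = (i + a - t) mod a) \<longleftrightarrow> (k mod a = i mod a)"
proof -
  have "((k - t) mod a = (i + a - t) mod a) \<longleftrightarrow> ((k - t + t) mod a = (i + a - t + t) mod a)"
    by (rule mod_shift_nat)
  also have "\<dots> \<longleftrightarrow> (k mod a = (i + a) mod a)" using assms by simp
  also have "\<dots> \<longleftrightarrow> (k mod a = i mod a)" by simp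
  finally show ?thesis .
qed

lemma sec_mult_P:
  fixes q :: "'a::comm_ring_1 poly"
  shows "sec a i ((\<Sum>j<a. monom 1 j) * q) = (\<Sum>t<a. monom 1 t * sec a (i + a - t) q)"
proof (rule poly_eqI)
  fix k
  have "coeff (sec a i ((\<Sum>j<a. monom 1 j) * q)) k =
     (\<Sum>t<a. if k mod a = i mod a then coeff (monom 1 t * q) k else 0)"
    by (simp add: coeff_sec sum_distrib_right coeff_sum)
  also have "\<dots> = (\<Sum>t<a. coeff (monom 1 t * sec a (i + a - t) q) k)"
    by (intro sum.cong) (auto simp: coeff_monom_mult coeff_sec modlem)
  finally show "coeff (sec a i ((\<Sum>j<a. monom 1 j) * q)) k = coeff (\<Sum>t<a. monom 1 t * sec a (i + a - t) q) k"
    by (simp add: coeff_sum)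
qed

lemma sec_all:
  assumes "a > 0"
  shows "(\<Sum>j<a. sec a j q) = q"
proof (rule poly_eqI)
  fix k
  have "coeff (\<Sum>j<a. sec a j q) k = (\<Sum>j<a. if j = k mod a then coeff q k else 0)"
    unfolding coeff_sum by (intro sum.cong) (auto simp: coeff_sec)
  also have "\<dots> = coeff q k" using assms by simp
  finally show "coeff (\<Sum>j<a. sec a j q) k = coeff q k" .
qed

lemma sec_mod: "sec a (j + a) q = sec a j q"
  by (rule poly_eqI) (simp add: coeff_sec)

lemma sec_interval:
  assumes "a > 0"
  shows "(\<Sum>j\<in>{m..<m+a}. sec a j q) = q"
proof (induction m)
  case 0
  then show ?case using sec_all[OF assms] by (simp add: atLeast0LessThan)
next
  case (Suc m)
  have "(\<Sum>j\<in>{m..<m+a}. sec a j q) = sec a m q + (\<Sum>j\<in>{Suc m..<m+a}. sec a j q)"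
    using assms by (simp add: sum.atLeast_Suc_lessThan)
  moreover have "(\<Sum>j\<in>{Suc m..<Suc m+a}. sec a j q) = (\<Sum>j\<in>{Suc m..<m+a}. sec a j q) + sec a (m + a) q"
    using assms by simp
  ultimately show ?case using Suc sec_mod[of a m q] assms by (simp add: add.commute)
qed

lemma sec_rev:
  assumes "a > 0"
  shows "(\<Sum>t<a. sec a (i + a - t) q) = q"
proof -
  have "(\<Sum>t<a. sec a (i + a - t) q) = (\<Sum>j\<in>{Suc i..<Suc i + a}. sec a j q)"
    by (rule sum.reindex_bij_witness[where i = "\<lambda>j. i + a - j" and j = "\<lambda>t. i + a - t"]) auto
  also have "\<dots> = q" by (rule sec_interval[OF assms])
  finally show ?thesis .
qed

lemma lin_dvd_monom: "[:1, -1::'a::comm_ring_1:] dvd monom 1 t - 1"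
proof -
  have "poly (monom (1::'a) t - 1) 1 = 0" by (simp add: poly_monom)
  then have "[:-1, 1:] dvd (monom (1::'a) t - 1)" using poly_eq_0_iff_dvd[of "monom (1::'a) t - 1" 1] by simp
  moreover have "[:1, -1::'a:] = - [:-1, 1:]" by simp
  ultimately show ?thesis by (metis minus_dvd_iff)
qed

lemma key_dvd:
  fixes dummy :: "'a::comm_ring_1"
  assumes "a > 0"
  shows "[:1, -1::'a:] ^ n dvd smult (of_nat a) (sec a i ((\<Sum>j<a. monom 1 j) ^ n)) - (\<Sum>j<a. monom 1 j) ^ n"
proof (induction n arbitrary: i)
  case 0
  then show ?case by simp
next
  case (Suc n)
  define P :: "'a poly" where "P = (\<Sum>j<a. monom 1 j)"
  define Q where "Q = P ^ n"
  define G where "G = (\<lambda>j. smult (of_nat a) (sec a j Q) - Q)"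
  have IH: "\<And>j. [:1, -1::'a:] ^ n dvd G j" using Suc.IH unfolding G_def Q_def P_def by blast
  have "smult (of_nat a) (sec a i (P ^ Suc n)) - P ^ Suc n =
      smult (of_nat a) (\<Sum>t<a. monom 1 t * sec a (i + a - t) Q) - (\<Sum>t<a. monom 1 t * Q)"
  proof -
    have "sec a i (P ^ Suc n) = (\<Sum>t<a. monom 1 t * sec a (i + a - t) Q)"
      unfolding power_Suc Q_def P_def by (rule sec_mult_P)
    moreover have "P ^ Suc n = (\<Sum>t<a. monom 1 t * Q)"
      unfolding power_Suc Q_def P_def by (rule sum_distrib_right)
    ultimately show ?thesis by simp
  qed
  also have "\<dots> = (\<Sum>t<a. monom 1 t * G (i + a - t))"
    by (simp add: G_def smult_sum_right right_diff_distrib sum_subtractf)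
  also have "\<dots> = (\<Sum>t<a. (monom 1 t - 1) * G (i + a - t)) + (\<Sum>t<a. G (i + a - t))"
    by (simp add: sum.distrib[symmetric] algebra_simps)
  also have "(\<Sum>t<a. G (i + a - t)) = 0"
  proof -
    have "(\<Sum>t<a. G (i + a - t)) = smult (of_nat a) (\<Sum>t<a. sec a (i + a - t) Q) - (\<Sum>t<a. Q)"
      by (simp add: G_def smult_sum_right sum_subtractf)
    also have "\<dots> = smult (of_nat a) Q - of_nat a * Q"
      by (simp only: sec_rev[OF assms, of i Q] sum_constant card_lessThan of_nat_poly)
    also have "\<dots> = 0" by (simp add: of_nat_poly)
    finally show ?thesis .
  qed
  finally have eq: "smult (of_nat a) (sec a i (P ^ Suc n)) - P ^ Suc n = (\<Sum>t<a. (monom 1 t - 1) * G (i + a - t))"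
    by simp
  have "[:1, -1::'a:] ^ Suc n dvd (\<Sum>t<a. (monom 1 t - 1) * G (i + a - t))"
  proof (rule dvd_sum)
    fix t
    show "[:1, -1::'a:] ^ Suc n dvd (monom 1 t - 1) * G (i + a - t)"
      unfolding power_Suc by (rule mult_dvd_mono[OF lin_dvd_monom IH])
  qed
  then show ?case using eq unfolding P_def by simp
qed

lemma coeff_P_pow:
  "coeff ((\<Sum>j<a. monom (1::'a::comm_ring_1) j) ^ n) k = of_nat (cc a n k)"
proof (induction n arbitrary: k)
  case 0
  then show ?case by (simp add: cc_def coeff_1)
next
  case (Suc n)
  have c1: "coeff (\<Sum>j<a. monom (1::'a) j) i = of_nat (coeff (\<Sum>j<a. monom (1::nat) j) i)" for i
    by (simp add: coeff_sum coeff_monom)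
  show ?case
    by (simp add: cc_def coeff_mult c1 Suc[unfolded cc_def])
qed

theorem lemma2p2:
  fixes a n :: nat and f :: "'a::field_char_0 poly"
  assumes "a > 0" and "n > 0" and "degree f < n"
  shows "(\<forall>i<a. Sigma_op a n i f = Sigma_op a n 0 f) \<and>
         (\<forall>i<a. Sigma_op a n i f = smult (1 / of_nat a) ((shift_sum a ^^ n) f))"
proof -
  define P :: "'a poly" where "P = (\<Sum>j<a. monom 1 j)"
  define Q where "Q = P ^ n"
  have ss: "shift_sum a g = opS P g" for g
    unfolding shift_sum_def P_def by (simp add: opS_sum opS_monom)
  have pow: "(shift_sum a ^^ m) f = opS (P ^ m) f" for m
  proof (induction m)
    case 0
    then show ?case by simp
  next
    case (Suc m)
    then show ?case by (simp add: ss opS_mult)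
  qed
  have degP: "degree P \<le> a - 1"
    unfolding P_def
  proof (rule degree_sum_le)
    fix j assume "j \<in> {..<a}"
    then show "degree (monom (1::'a) j) \<le> a - 1"
      using degree_monom_le[of "1::'a" j] by simp
  qed simp
  have degQ: "degree Q \<le> n * (a - 1)"
    unfolding Q_def using degree_power_le[of P n] degP
    by (metis dual_order.trans mult.commute mult_le_mono2)
  have sig: "Sigma_op a n i f = opS (sec a i Q) f" if "i < a" for i
  proof -
    let ?N = "n * (a - 1)"
    have "opS (sec a i Q) f = (\<Sum>k\<in>{..?N}. smult (coeff (sec a i Q) k) (sh k f))"
    proof (rule opS_gen)
      fix k assume "coeff (sec a i Q) k \<noteq> 0"
      then have "coeff Q k \<noteq> 0" by (simp add: coeff_sec split: if_splits)
      then have "k \<le> degree Q" by (rule le_degree)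
      then show "k \<in> {..?N}" using degQ by simp
    qed simp
    also have "\<dots> = (\<Sum>k\<in>{..?N}. if k mod a = i then smult (of_nat (cc a n k)) (pcompose f [:- of_nat k, 1:]) else 0)"
      using that by (intro sum.cong) (auto simp: coeff_sec Q_def P_def coeff_P_pow sh_def)
    also have "\<dots> = (\<Sum>k\<in>{k \<in> {..?N}. k mod a = i}. smult (of_nat (cc a n k)) (pcompose f [:- of_nat k, 1:]))"
      by (rule sum.inter_filter[symmetric]) simp
    also have "{k \<in> {..?N}. k mod a = i} = {k. k \<le> ?N \<and> k mod a = i}" by auto
    finally show ?thesis unfolding Sigma_op_def by simp
  qed
  have main: "Sigma_op a n i f = smult (1 / of_nat a) ((shift_sum a ^^ n) f)" if "i < a" for i
  proof -
    obtain e where e: "smult (of_nat a) (sec a i Q) - Q = [:1, -1::'a:] ^ n * e"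
      using key_dvd[OF assms(1), of n i] unfolding Q_def P_def by (elim dvdE)
    have "opS (smult (of_nat a) (sec a i Q) - Q) f = 0"
      unfolding e by (simp add: mult.commute[of _ e] opS_mult opS_kill[OF assms(3)])
    then have "smult (of_nat a) (opS (sec a i Q) f) = opS Q f"
      by (simp add: opS_minus opS_smult)
    then have h: "smult (of_nat a) (opS (sec a i Q) f) = opS Q f" .
    have "opS (sec a i Q) f = smult (1 / of_nat a) (opS Q f)"
    proof -
      have nz: "(of_nat a :: 'a) \<noteq> 0" using assms(1) by simp
      have "smult (1 / of_nat a) (smult (of_nat a) (opS (sec a i Q) f)) = smult (1 / of_nat a) (opS Q f)"
        using h by simp
      then show ?thesis using nz by (simp add: smult_smult)
    qed
    then show ?thesis using sig[OF that] pow[of n] by (simp add: Q_def)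
  qed
  show ?thesis using main assms(1) by simp
qed

end
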